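(* Let $n\ge1$, $C>0$, $\sigma:\mathbb{R}\to\mathbb{R}$ a sigmoidal function, and let $\mathbf{A},\mathbf{B}\in\mathbb{R}^{n\times n}$ be non-singular diagonalizable matrices such that (i) $\mathbf{A}^q=a\mathbf{I}$ for some positive integer $q\le n$ and scalar $a\ne0$; (ii) $\mathbf{I}-a\mathbf{B}^q$ is nonsingular; (iii) the eigenvalues of $\mathbf{B}$ have pairwise distinct absolute values. Let $$G_\sigma=\{\mathbf{x}\mapsto\alpha\,\sigma(\mathbf{y}^T\mathbf{x}+\theta):\ |\alpha|\le 2C,\ \mathbf{y}\in\mathbb{R}^n,\ \theta\in\mathbb{R}\},$$ let $G^k_\sigma$ be the set of functions that are sums of at most $k$ elements of $G_\sigma$, and let $S^{kn}_\sigma$ be the set of functions $$\mathbf{x}\mapsto\sum_{j=1}^{kn}\alpha_j\,\sigma(\mathbf{y}_j^T\mathbf{x}+\theta_j)$$ with $|\alpha_j|\le 2C$, $\mathbf{y}_j\in\mathbb{R}^n$, $\theta_j\in\mathbb{R}$, such that for every $i=1,\dots,k$ the matrix $\mathbf{M}_i=[\mathbf{y}_{(i-1)n+1}|\mathbf{y}_{(i-1)n+2}|\cdots|\mathbf{y}_{in}]\in\mathbb{R}^{n\times n}$ satisfies $\mathbf{M}_i-\mathbf{A}\mathbf{M}_i\mathbf{B}=\mathbf{g}_i\mathbf{h}_i^T$ for some $\mathbf{g}_i,\mathbf{h}_i\in\mathbb{R}^n$. Then for every $k\ge1$, $G^k_\sigma\subseteq S^{kn}_\sigma$.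
   Context: A sigmoidal function is a bounded measurable function $\sigma:\mathbb{R}\to\mathbb{R}$ with $\sigma(t)\to1$ as $t\to+\infty$ and $\sigma(t)\to0$ as $t\to-\infty$. Functions are considered on $\mathbb{R}^n$ (or a ball in $\mathbb{R}^n$). *)

theory Defs
  imports "HOL-Analysis.Analysis"
begin

definition sigmoidal :: "(real \<Rightarrow> real) \<Rightarrow> bool" where
  "sigmoidal \<sigma> \<longleftrightarrow> bounded (range \<sigma>) \<and> \<sigma> \<in> borel_measurable borel \<and>
     (\<sigma> \<longlongrightarrow> 1) at_top \<and> (\<sigma> \<longlongrightarrow> 0) at_bot"

fun mpow :: "'a::semiring_1 ^'n^'n \<Rightarrow> nat \<Rightarrow> 'a^'n^'n" where
  "mpow M 0 = mat 1"
| "mpow M (Suc k) = M ** mpow M k"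

definition cmat :: "real^'n^'m \<Rightarrow> complex^'n^'m" where
  "cmat M = (\<chi> i j. complex_of_real (M $ i $ j))"

definition diagm :: "('n \<Rightarrow> 'a::zero) \<Rightarrow> 'a^'n^'n" where
  "diagm d = (\<chi> i j. if i = j then d i else 0)"

text \<open>A real matrix is diagonalizable (over the complex numbers) with eigenvalue list d
  (eigenvalues with multiplicity, indexed by 'n).\<close>
definition diagonalizable_with :: "real^'n^'n \<Rightarrow> ('n \<Rightarrow> complex) \<Rightarrow> bool" where
  "diagonalizable_with M d \<longleftrightarrow>
     (\<exists>P::complex^'n^'n. invertible P \<and> cmat M = P ** diagm d ** matrix_inv P)"

definition diagonalizable :: "real^'n^'n \<Rightarrow> bool" where
  "diagonalizable M \<longleftrightarrow> (\<exists>d. diagonalizable_with M d)"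

definition outer :: "real^'n \<Rightarrow> real^'n \<Rightarrow> real^'n^'n" where
  "outer g h = (\<chi> r c. g $ r * h $ c)"

definition G_sig :: "real \<Rightarrow> (real \<Rightarrow> real) \<Rightarrow> (real^'n \<Rightarrow> real) set" where
  "G_sig C \<sigma> = {(\<lambda>x. \<alpha> * \<sigma> (y \<bullet> x + \<theta>)) | \<alpha> y \<theta>. \<bar>\<alpha>\<bar> \<le> 2 * C}"

definition G_sig_k :: "nat \<Rightarrow> real \<Rightarrow> (real \<Rightarrow> real) \<Rightarrow> (real^'n \<Rightarrow> real) set" where
  "G_sig_k k C \<sigma> = {(\<lambda>x. \<Sum>j<m. g j x) | m g. m \<le> k \<and> (\<forall>j<m. g j \<in> G_sig C \<sigma>)}"

text \<open>S^{kn}: the kn neurons are indexed by pairs (i, c), i < k the block, c :: 'n the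
  column of the block matrix M_i = [y_(i,c)]_c.\<close>
definition S_sig :: "nat \<Rightarrow> real \<Rightarrow> (real \<Rightarrow> real) \<Rightarrow> real^'n^'n \<Rightarrow> real^'n^'n
                      \<Rightarrow> (real^'n \<Rightarrow> real) set" where
  "S_sig k C \<sigma> A B = {(\<lambda>x. \<Sum>i<k. \<Sum>c\<in>UNIV. \<alpha> i c * \<sigma> (y i c \<bullet> x + \<theta> i c)) | \<alpha> y \<theta>.
      (\<forall>i<k. \<forall>c. \<bar>\<alpha> i c\<bar> \<le> 2 * C) \<and>
      (\<forall>i<k. let M = (\<chi> r c. y i c $ r) in \<exists>g h. M - A ** M ** B = outer g h)}"

end

theory Submission
  imports Defs
begin

lemma row_mult: "(X ** Y) $ i = (X $ i) v* Y"
  by (simp add: matrix_matrix_mult_def vector_matrix_mult_def vec_eq_iff mult.commute)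

lemma outer_left: "A ** outer g h = outer (A *v g) h"
  by (simp add: outer_def matrix_matrix_mult_def matrix_vector_mult_def vec_eq_iff sum_distrib_right mult.assoc)

lemma outer_right: "outer g h ** B = outer g (h v* B)"
  by (simp add: outer_def matrix_matrix_mult_def vector_matrix_mult_def vec_eq_iff sum_distrib_left mult.assoc)

lemma outer_diff: "outer g h - outer g' h = outer (g - g') h"
  by (simp add: outer_def vec_eq_iff algebra_simps)

lemma outer_scale_right: "outer g (c *\<^sub>R h) = outer (c *\<^sub>R g) h"
  by (simp add: outer_def vec_eq_iff algebra_simps)

lemma if_mult0: "(if P then a else 0) * (b::'a::semiring_0) = (if P then a*b else 0)"
  by simp

lemma diag_row: "(diagm d ** Q) $ i = d i *s Q $ i"
  by (simp add: diagm_def matrix_matrix_mult_def vec_eq_iff if_mult0)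

lemma vdiag: "(z v* diagm d) $ k = z $ k * d k"
  by (simp add: diagm_def vector_matrix_mult_def if_distrib sum.delta' cong: if_cong)

lemma real_left_eigvec:
  fixes B :: "real^'n^'n"
  assumes "diagonalizable_with B d" "\<And>i j. i \<noteq> j \<Longrightarrow> cmod (d i) \<noteq> cmod (d j)"
  shows "\<exists>v l. v \<noteq> 0 \<and> v v* B = l *\<^sub>R v"
proof -
  obtain P where Pi: "invertible P" and PB: "cmat B = P ** diagm d ** matrix_inv P"
    using assms(1) unfolding diagonalizable_with_def by blast
  define Q where "Q = matrix_inv P"
  have PQ: "P ** Q = mat 1" and QP: "Q ** P = mat 1"
    using someI_ex[OF Pi[unfolded invertible_def]] unfolding Q_def matrix_inv_def by auto
  define D where "D = diagm d"
  obtain i0 :: 'n where True by blast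
  define u where "u = Q $ i0"
  have QB: "Q ** cmat B = D ** Q"
  proof -
    have "Q ** cmat B = (Q ** P) ** (D ** Q)"
      by (simp add: PB Q_def[symmetric] D_def[symmetric] matrix_mul_assoc)
    then show ?thesis by (simp add: QP)
  qed
  have ueq: "u v* cmat B = d i0 *s u"
  proof -
    have "u v* cmat B = (Q ** cmat B) $ i0" by (simp add: row_mult u_def)
    also have "\<dots> = (D ** Q) $ i0" by (simp add: QB)
    also have "\<dots> = d i0 *s u" unfolding D_def diag_row u_def ..
    finally show ?thesis .
  qed
  have unz: "u \<noteq> 0"
  proof
    assume "u = 0"
    then have "(Q ** P) $ i0 $ i0 = 0" by (simp add: row_mult u_def[symmetric])
    then show False by (simp add: QP mat_def)
  qed
  define w where "w = (\<chi> c. cnj (u $ c))"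
  have weq: "w v* cmat B = cnj (d i0) *s w"
  proof -
    have "(w v* cmat B) $ c = cnj ((u v* cmat B) $ c)" for c
      by (simp add: w_def vector_matrix_mult_def cmat_def)
    then show ?thesis using ueq by (simp add: vec_eq_iff w_def)
  qed
  have wnz: "w \<noteq> 0" using unz by (auto simp: w_def vec_eq_iff)
  define z where "z = w v* P"
  have znz: "z \<noteq> 0"
  proof
    assume "z = 0"
    then have "z v* Q = 0" by simp
    then show False using wnz by (simp add: z_def vector_matrix_mul_assoc PQ)
  qed
  have "z v* D = w v* (P ** D ** (Q ** P))"
    by (simp add: z_def vector_matrix_mul_assoc QP)
  also have "\<dots> = w v* (cmat B ** P)"
    by (simp add: PB D_def Q_def matrix_mul_assoc)
  also have "\<dots> = cnj (d i0) *s z"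
    by (simp add: vector_matrix_mul_assoc[symmetric] weq z_def scalar_vector_matrix_assoc)
  finally have zD: "z v* D = cnj (d i0) *s z" .
  obtain k where zk: "z $ k \<noteq> 0" using znz by (auto simp: vec_eq_iff)
  have "z $ k * d k = cnj (d i0) * z $ k"
    using arg_cong[OF zD, of "\<lambda>v. v $ k"] by (simp add: vdiag D_def)
  then have "d k = cnj (d i0)" using zk by (simp add: mult.commute)
  then have dk: "d k = cnj (d i0)" .
  have "k = i0"
  proof (rule ccontr)
    assume "k \<noteq> i0"
    then have "cmod (d k) \<noteq> cmod (d i0)" by (rule assms(2))
    then show False using dk by simp
  qed
  then have "Im (d i0) = - Im (d i0)" using arg_cong[OF dk, of Im] by simp
  then have dreal: "d i0 = complex_of_real (Re (d i0))"
    by (simp add: complex_eq_iff)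
  define l where "l = Re (d i0)"
  have comp: "(\<Sum>r\<in>UNIV. u $ r * complex_of_real (B $ r $ c)) = complex_of_real l * u $ c" for c
    using arg_cong[OF ueq, of "\<lambda>v. v $ c"] dreal
    by (simp add: vector_matrix_mult_def cmat_def l_def)
  define vr where "vr = (\<chi> c. Re (u $ c))"
  define vi where "vi = (\<chi> c. Im (u $ c))"
  have "vr v* B = l *\<^sub>R vr"
  proof -
    have "(vr v* B) $ c = (l *\<^sub>R vr) $ c" for c
      using arg_cong[OF comp[of c], of Re] by (simp add: vr_def vector_matrix_mult_def Re_sum)
    then show ?thesis by (simp add: vec_eq_iff)
  qed
  moreover have "vi v* B = l *\<^sub>R vi"
  proof -
    have "(vi v* B) $ c = (l *\<^sub>R vi) $ c" for c
      using arg_cong[OF comp[of c], of Im] by (simp add: vi_def vector_matrix_mult_def Im_sum)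
    then show ?thesis by (simp add: vec_eq_iff)
  qed
  moreover have "vr \<noteq> 0 \<or> vi \<noteq> 0"
    using unz by (auto simp: vr_def vi_def vec_eq_iff complex_eq_iff)
  ultimately show ?thesis by blast
qed


theorem lemma3:
  fixes C :: real and \<sigma> :: "real \<Rightarrow> real"
    and A B :: "real^'n^'n" and q :: nat and a :: real and k :: nat
  assumes "C > 0"
    and "sigmoidal \<sigma>"
    and "invertible A" and "invertible B"
    and "diagonalizable A"
    and "0 < q" and "q \<le> CARD('n)" and "a \<noteq> 0" and "mpow A q = mat a"
    and "invertible (mat 1 - a *\<^sub>R mpow B q)"
    and "diagonalizable_with B d" and "\<And>i j. i \<noteq> j \<Longrightarrow> cmod (d i) \<noteq> cmod (d j)"
    and "k \<ge> 1"
  shows "G_sig_k k C \<sigma> \<subseteq> S_sig k C \<sigma> A B"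
proof
  obtain v0 l where v0: "v0 \<noteq> 0" "v0 v* B = l *\<^sub>R v0"
    using real_left_eigvec[OF assms(11,12)] by blast
  obtain c0 where c0: "v0 $ c0 \<noteq> 0" using v0(1) by (auto simp: vec_eq_iff)
  define v where "v = (1 / v0 $ c0) *\<^sub>R v0"
  have vc0: "v $ c0 = 1" using c0 by (simp add: v_def)
  have vB: "v v* B = l *\<^sub>R v"
    by (simp add: v_def scaleR_vector_matrix_assoc v0(2))
  fix f :: "real^'n \<Rightarrow> real" assume "f \<in> G_sig_k k C \<sigma>"
  then obtain m g where f: "f = (\<lambda>x. \<Sum>j<m. g j x)" and mk: "m \<le> k"
    and g: "\<forall>j<m. g j \<in> G_sig C \<sigma>"
    unfolding G_sig_k_def by blast
  have "\<forall>j. \<exists>al yy th. j < m \<longrightarrow> \<bar>al\<bar> \<le> 2 * C \<and> g j = (\<lambda>x. al * \<sigma> (yy \<bullet> x + th))"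
    using g unfolding G_sig_def by blast
  then obtain al yy th where alt: "\<And>j. j < m \<Longrightarrow> \<bar>al j\<bar> \<le> 2 * C \<and> g j = (\<lambda>x. al j * \<sigma> (yy j \<bullet> x + th j))"
    by metis
  define \<alpha> where "\<alpha> = (\<lambda>i c. if i < m \<and> c = c0 then al i else (0::real))"
  define y :: "nat \<Rightarrow> 'n \<Rightarrow> real^'n" where "y = (\<lambda>i c. if i < m then v $ c *\<^sub>R yy i else (0::real^'n))"
  define \<theta> where "\<theta> = (\<lambda>(i::nat) (c::'n). th i)"
  have inner: "(\<Sum>c\<in>UNIV. \<alpha> i c * \<sigma> (y i c \<bullet> x + \<theta> i c)) = (if i < m then g i x else 0)" for i x
  proof (cases "i < m")
    case True
    have "(\<Sum>c\<in>UNIV. \<alpha> i c * \<sigma> (y i c \<bullet> x + \<theta> i c))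
        = (\<Sum>c\<in>UNIV. if c = c0 then al i * \<sigma> (yy i \<bullet> x + th i) else 0)"
      by (rule sum.cong) (auto simp: \<alpha>_def y_def \<theta>_def True vc0)
    also have "\<dots> = g i x" using alt[OF True] by simp
    finally show ?thesis using True by simp
  qed (simp add: \<alpha>_def)
  have fsum: "f = (\<lambda>x. \<Sum>i<k. \<Sum>c\<in>UNIV. \<alpha> i c * \<sigma> (y i c \<bullet> x + \<theta> i c))"
  proof
    fix x
    have "(\<Sum>i<k. \<Sum>c\<in>UNIV. \<alpha> i c * \<sigma> (y i c \<bullet> x + \<theta> i c)) = (\<Sum>i<k. if i < m then g i x else 0)"
      by (simp add: inner)
    also have "\<dots> = (\<Sum>i<m. if i < m then g i x else 0)"
      by (rule sum.mono_neutral_right) (use mk in auto)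
    also have "\<dots> = f x" by (simp add: f)
    finally show "f x = (\<Sum>i<k. \<Sum>c\<in>UNIV. \<alpha> i c * \<sigma> (y i c \<bullet> x + \<theta> i c))" by simp
  qed
  have bnd: "\<forall>i<k. \<forall>c. \<bar>\<alpha> i c\<bar> \<le> 2 * C"
    using alt assms(1) by (auto simp: \<alpha>_def)
  have mat: "\<forall>i<k. let M = (\<chi> r c. y i c $ r) in \<exists>g h. M - A ** M ** B = outer g h"
  proof (intro allI impI)
    fix i assume "i < k"
    show "let M = (\<chi> r c. y i c $ r) in \<exists>g h. M - A ** M ** B = outer g h"
    proof (cases "i < m")
      case True
      have M: "(\<chi> r c. y i c $ r) = outer (yy i) v"
        by (simp add: y_def True outer_def vec_eq_iff mult.commute)
      have "outer (yy i) v - A ** outer (yy i) v ** B = outer (yy i - l *\<^sub>R (A *v yy i)) v"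
        by (simp add: outer_left outer_right vB outer_scale_right outer_diff)
      then show ?thesis unfolding Let_def M by blast
    next
      case False
      have M: "(\<chi> r c. y i c $ r) = (0::real^'n^'n)"
        by (simp add: y_def False vec_eq_iff)
      have "(0::real^'n^'n) - A ** 0 ** B = outer 0 0"
        by (simp add: outer_def vec_eq_iff matrix_matrix_mult_def)
      then show ?thesis unfolding Let_def M by blast
    qed
  qed
  show "f \<in> S_sig k C \<sigma> A B"
    unfolding S_sig_def using fsum bnd mat by blast
qed

end
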